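(* Let $\mu$ be a complex measure on the Borel $\sigma$-algebra of $[0,1)$, and let $|\mu|$ be its total variation measure. Assume that for some real $\sigma\ge 0$ the following Hölder condition at $1$ holds: $$(H_\sigma)\qquad \exists K<\infty\ \ \forall x\in[0,1):\quad |\mu|\bigl([x,1)\bigr)\le K(1-x)^\sigma .$$ For real $m\ge 0$ let $u_m=\int_{[0,1)}x^m\,\mu(dx)$ (with $0^0=1$), and for real $t$ let $E(t)=\int_{[0,1)}e^{tx}\,\mu(dx)$. Then, as the real variable $m\to+\infty$, $$u_m=e^{-m}E(m)+O\!\left(\frac{1}{m^{1+\sigma}}\right).$$ *)

theory Defs
  imports "HOL-Analysis.Analysis" "HOL-Library.Landau_Symbols"
begin

text \<open>A complex measure on the Borel sets of [0,1) is represented by its polar/density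
  form: a finite positive measure M on the Borel sets of [0,1) together with an
  M-integrable density f, i.e. mu(A) = integral over A of f dM.
  Its total variation measure is |mu|(A) = integral over A of |f| dM.\<close>

definition cmeasure_apply :: "real measure \<Rightarrow> (real \<Rightarrow> complex) \<Rightarrow> real set \<Rightarrow> complex" where
  "cmeasure_apply M f A = (LINT x:A|M. f x)"

definition total_variation :: "real measure \<Rightarrow> (real \<Rightarrow> complex) \<Rightarrow> real set \<Rightarrow> real" where
  "total_variation M f A = (LINT x:A|M. cmod (f x))"

definition cintegral :: "real measure \<Rightarrow> (real \<Rightarrow> complex) \<Rightarrow> (real \<Rightarrow> complex) \<Rightarrow> complex" where
  "cintegral M f g = (LINT x|M. g x * f x)"

definition rpow :: "real \<Rightarrow> real \<Rightarrow> real" where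
  "rpow x m = (if x = 0 then (if m = 0 then 1 else 0) else x powr m)"

end

theory Submission
  imports Defs "HOL-Real_Asymp.Real_Asymp"
begin

lemma pt_bound:
  fixes m x :: real
  assumes m: "m \<ge> 2" and x: "0 \<le> x" "x < 1"
  shows "\<bar>x powr m - exp (-m*(1-x))\<bar> \<le> 2*m*(1-x)^2*exp(-m*(1-x))"
proof -
  define y where "y = 1 - x"
  have y: "0 < y" "y \<le> 1" "x = 1 - y" using x by (auto simp: y_def)
  have low: "x powr m \<le> exp (-m*y)"
  proof (cases "x = 0")
    case True then show ?thesis by simp
  next
    case False
    then have "x > 0" using x by simp
    then have "ln x \<le> x - 1" using ln_le_minus_one by blast
    then have "ln x \<le> -y" using y by simp
    then have "m * ln x \<le> m * (-y)" using m by (intro mult_left_mono) auto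
    then show ?thesis using \<open>x>0\<close> by (simp add: powr_def)
  qed
  have up: "exp (-m*y) - x powr m \<le> 2*m*y^2*exp(-m*y)"
  proof (cases "y \<le> 1/2")
    case True
    then have "x > 0" using y by simp
    have "- y - 2 * y\<^sup>2 \<le> ln (1 - y)" using ln_one_minus_pos_lower_bound[of y] True y by simp
    then have "m * (- y - 2 * y\<^sup>2) \<le> m * ln x" using m y by (intro mult_left_mono) auto
    then have "exp (m * (- y - 2 * y\<^sup>2)) \<le> x powr m" using \<open>x>0\<close> by (simp add: powr_def)
    moreover have "exp (m * (- y - 2 * y\<^sup>2)) = exp(-m*y) * exp (-(2*m*y^2))"
      by (simp add: exp_add[symmetric] algebra_simps)
    moreover have "1 - exp (-(2*m*y^2)) \<le> 2*m*y^2"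
      using exp_ge_add_one_self[of "-(2*m*y^2)"] by linarith
    ultimately have "exp (-m*y) - x powr m \<le> exp(-m*y) * (1 - exp (-(2*m*y^2)))"
      by (simp add: algebra_simps)
    also have "\<dots> \<le> exp(-m*y) * (2*m*y^2)"
      using \<open>1 - exp (-(2*m*y^2)) \<le> 2*m*y^2\<close> by (intro mult_left_mono) auto
    finally show ?thesis by (simp add: algebra_simps)
  next
    case False
    then have "y^2 \<ge> (1/2)^2" using y by (intro power_mono) auto
    then have "y^2 \<ge> 1/4" by (simp add: power2_eq_square)
    then have "2*m*y^2 \<ge> 2*2*(1/4)" using m by (intro mult_mono) auto
    then have "2*m*y^2 \<ge> 1" by simp
    then have "exp(-m*y) \<le> 2*m*y^2*exp(-m*y)" by simp
    moreover have "x powr m \<ge> 0" by simp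
    ultimately show ?thesis by linarith
  qed
  show ?thesis using low up by (simp add: y_def abs_if)
qed

lemma summ_a: "summable (\<lambda>n::nat. real (Suc n) powr p * exp(-real n))"
proof (rule summable_comparison_test_bigo)
  show "summable (\<lambda>n. norm (real n powr (-2)))"
    using summable_real_powr_iff[of "-2"] by simp
  show "(\<lambda>n. real (Suc n) powr p * exp(-real n)) \<in> O(\<lambda>n. real n powr (-2))"
    by real_asymp
qed

lemma ennreal_term_le_suminf: "(f::nat\<Rightarrow>ennreal) j \<le> (\<Sum>i. f i)"
  using ennreal_suminf_lessD linorder_not_le by blast

theorem proposition1:
  fixes M :: "real measure" and f :: "real \<Rightarrow> complex" and \<sigma> :: real
  assumes sets_M: "sets M = sets (restrict_space borel {0..<1::real})"
    and fin: "finite_measure M"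
    and f_int: "integrable M f"
    and sigma_nonneg: "\<sigma> \<ge> 0"
    and holder: "\<exists>K::real. \<forall>x\<in>{0..<1::real}.
                   total_variation M f {x..<1} \<le> K * (1 - x) powr \<sigma>"
  shows "(\<lambda>m::real. cintegral M f (\<lambda>x. complex_of_real (rpow x m))
            - complex_of_real (exp (- m)) * cintegral M f (\<lambda>x. complex_of_real (exp (m * x))))
         \<in> O[at_top](\<lambda>m. complex_of_real (1 / m powr (1 + \<sigma>)))"
proof -
  obtain K where K: "\<And>x. x \<in> {0..<1::real} \<Longrightarrow> total_variation M f {x..<1} \<le> K * (1 - x) powr \<sigma>"
    using holder by blast
  have spM: "space M = {0..<1}"
    using sets_eq_imp_space_eq[OF sets_M] by (simp add: space_restrict_space)
  have measR: "g \<in> borel_measurable M" if "g \<in> borel_measurable borel" for g :: "real \<Rightarrow> real"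
    using measurable_cong_sets[OF sets_M refl] measurable_restrict_space1[OF that] by blast
  have measC: "g \<in> borel_measurable M" if "g \<in> borel_measurable borel" for g :: "real \<Rightarrow> complex"
    using measurable_cong_sets[OF sets_M refl] measurable_restrict_space1[OF that] by blast
  have fmeas: "f \<in> borel_measurable M" using f_int by simp
  have cfint: "integrable M (\<lambda>x. cmod (f x))" using f_int by simp
  have ind_int: "integrable M (\<lambda>x. indicator {a..<b} x * cmod (f x))" for a b :: real
  proof (rule Bochner_Integration.integrable_bound[OF cfint])
    show "(\<lambda>x. indicator {a..<b} x * cmod (f x)) \<in> borel_measurable M"
    proof (rule borel_measurable_times)
      show "(indicator {a..<b} :: real \<Rightarrow> real) \<in> borel_measurable M" by (intro measR borel_measurable_indicator) simp
      show "(\<lambda>x. cmod (f x)) \<in> borel_measurable M" using fmeas by simp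
    qed
    show "AE x in M. norm (indicator {a..<b} x * cmod (f x)) \<le> norm (cmod (f x))"
      by (auto simp: indicator_def)
  qed
  have tv_nn: "(\<integral>\<^sup>+x. ennreal (indicator {a..<1} x * cmod (f x)) \<partial>M) = ennreal (total_variation M f {a..<1})" for a
    unfolding total_variation_def set_lebesgue_integral_def
    by (subst nn_integral_eq_integral[OF ind_int]) auto
  have K0: "K \<ge> 0"
  proof -
    have "0 \<le> total_variation M f {0..<1}"
      unfolding total_variation_def set_lebesgue_integral_def
      by (intro integral_nonneg_AE) (auto simp: indicator_def)
    also have "\<dots> \<le> K" using K[of 0] by simp
    finally show ?thesis .
  qed
  define a where "a = (\<lambda>n::nat. real (Suc n) powr (2 + \<sigma>) * exp (- real n))"
  have a_summ: "summable a" unfolding a_def by (rule summ_a)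
  have a_nn: "a n \<ge> 0" for n unfolding a_def by simp
  define S where "S = suminf a"
  have S0: "S \<ge> 0" unfolding S_def using a_summ a_nn by (simp add: suminf_nonneg)
  define C where "C = 2 * K * S"
  have main: "norm (cintegral M f (\<lambda>x. complex_of_real (rpow x m))
            - complex_of_real (exp (- m)) * cintegral M f (\<lambda>x. complex_of_real (exp (m * x))))
        \<le> C * norm (complex_of_real (1 / m powr (1 + \<sigma>)))" if m: "m \<ge> 2" for m :: real
  proof -
    have m0: "m > 0" using m by simp
    have rp: "\<And>x. rpow x m = x powr m" using m0 by (auto simp: rpow_def)
    have cint: "integrable M (\<lambda>x. complex_of_real (g x) * f x)"
      if gm: "g \<in> borel_measurable borel" and gb: "\<And>x. x \<in> {0..<1} \<Longrightarrow> \<bar>g x\<bar> \<le> 1" for g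
    proof (rule Bochner_Integration.integrable_bound[OF f_int])
      have "(\<lambda>x. complex_of_real (g x)) \<in> borel_measurable M" using measR[OF gm] by simp
      then show "(\<lambda>x. complex_of_real (g x) * f x) \<in> borel_measurable M" using fmeas by simp
      show "AE x in M. norm (complex_of_real (g x) * f x) \<le> norm (f x)"
      proof (rule AE_I2)
        fix x assume "x \<in> space M"
        then have "\<bar>g x\<bar> \<le> 1" using gb spM by auto
        then show "norm (complex_of_real (g x) * f x) \<le> norm (f x)"
          by (simp add: norm_mult mult_left_le_one_le)
      qed
    qed
    have pm_meas: "(\<lambda>x::real. x powr m) \<in> borel_measurable borel" by measurable
    have em_meas: "(\<lambda>x::real. exp (-m*(1-x))) \<in> borel_measurable borel" by measurable
    have pm_b: "\<bar>x powr m\<bar> \<le> 1" if "x \<in> {0..<1}" for x :: real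
    proof -
      have "x powr m \<le> 1 powr m" using that m0 by (intro powr_mono2) auto
      then show ?thesis by simp
    qed
    have em_b: "\<bar>exp (-m*(1-x))\<bar> \<le> 1" if "x \<in> {0..<1}" for x :: real
      using that m0 by (simp add: mult_nonneg_nonneg)
    define h where "h = (\<lambda>x. x powr m - exp (-m*(1-x)))"
    have eq1: "cintegral M f (\<lambda>x. complex_of_real (rpow x m))
            - complex_of_real (exp (- m)) * cintegral M f (\<lambda>x. complex_of_real (exp (m * x)))
          = (LINT x|M. complex_of_real (h x) * f x)"
    proof -
      have "complex_of_real (exp (- m)) * cintegral M f (\<lambda>x. complex_of_real (exp (m * x)))
          = (LINT x|M. complex_of_real (exp (- m)) * (complex_of_real (exp (m * x)) * f x))"
        unfolding cintegral_def by simp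
      also have "\<dots> = (LINT x|M. complex_of_real (exp (-m*(1-x))) * f x)"
      proof (rule Bochner_Integration.integral_cong[OF refl])
        fix x
        have "exp (- m) * exp (m * x) = exp (-m*(1-x))" by (simp add: exp_add[symmetric] algebra_simps)
        then show "complex_of_real (exp (- m)) * (complex_of_real (exp (m * x)) * f x)
             = complex_of_real (exp (-m*(1-x))) * f x"
          by (metis (no_types, lifting) mult.assoc of_real_mult)
      qed
      finally have e2: "complex_of_real (exp (- m)) * cintegral M f (\<lambda>x. complex_of_real (exp (m * x)))
          = (LINT x|M. complex_of_real (exp (-m*(1-x))) * f x)" .
      have e1: "cintegral M f (\<lambda>x. complex_of_real (rpow x m)) = (LINT x|M. complex_of_real (x powr m) * f x)"
        unfolding cintegral_def rp ..
      have i1: "integrable M (\<lambda>x. complex_of_real (x powr m) * f x)"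
        by (rule cint[OF pm_meas pm_b])
      have i2: "integrable M (\<lambda>x. complex_of_real (exp (-m*(1-x))) * f x)"
        by (rule cint[OF em_meas em_b])
      show ?thesis unfolding e1 e2 h_def
        by (subst Bochner_Integration.integral_diff[OF i1 i2, symmetric])
           (simp add: algebra_simps)
    qed
    have nb: "norm (LINT x|M. complex_of_real (h x) * f x) \<le> (LINT x|M. \<bar>h x\<bar> * cmod (f x))"
      using integral_norm_bound[of M "\<lambda>x. complex_of_real (h x) * f x"] by (simp add: norm_mult)
    define B where "B = (\<lambda>j::nat. {1 - (real j + 1) / m ..< 1 - real j / m})"
    define c where "c = (\<lambda>j::nat. 2 * (real j + 1)^2 * exp (- real j) / m)"
    have c0: "c j \<ge> 0" for j unfolding c_def using m0 by simp
    have hmeas: "h \<in> borel_measurable M" unfolding h_def by (intro measR borel_measurable_diff pm_meas em_meas)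
    have hfint: "integrable M (\<lambda>x. \<bar>h x\<bar> * cmod (f x))"
    proof (rule Bochner_Integration.integrable_bound[OF cfint])
      show "(\<lambda>x. \<bar>h x\<bar> * cmod (f x)) \<in> borel_measurable M" using hmeas fmeas by simp
      show "AE x in M. norm (\<bar>h x\<bar> * cmod (f x)) \<le> norm (cmod (f x))"
      proof (rule AE_I2)
        fix x assume "x \<in> space M"
        then have x: "x \<in> {0..<1}" using spM by simp
        have "0 \<le> x powr m" "0 < exp (-m*(1-x))" by simp_all
        moreover have "x powr m \<le> 1" "exp (-m*(1-x)) \<le> 1" using pm_b[OF x] em_b[OF x] by simp_all
        ultimately have "\<bar>h x\<bar> \<le> 1" unfolding h_def by (simp only: abs_le_iff) linarith
        then show "norm (\<bar>h x\<bar> * cmod (f x)) \<le> norm (cmod (f x))"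
          by (simp add: abs_mult mult_left_le_one_le)
      qed
    qed
    have ptw: "ennreal (\<bar>h x\<bar> * cmod (f x)) \<le> (\<Sum>j. ennreal (c j * (indicator (B j) x * cmod (f x))))"
      if x: "x \<in> space M" for x
    proof -
      have x: "0 \<le> x" "x < 1" using x spM by auto
      define s where "s = m * (1 - x)"
      have s0: "s > 0" using m0 x by (simp add: s_def)
      define j0 where "j0 = nat (\<lceil>s\<rceil> - 1)"
      have cs: "\<lceil>s\<rceil> \<ge> 1" using s0 by simp
      have j0r: "real j0 = real_of_int \<lceil>s\<rceil> - 1" unfolding j0_def using cs by simp
      have j0s: "real j0 < s" "s \<le> real j0 + 1"
        using j0r ceiling_correct[of s] by linarith+
      have xB: "x \<in> B j0"
      proof -
        have "(real j0 + 1) / m \<ge> 1 - x" using j0s m0 by (simp add: s_def field_simps)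
        moreover have "real j0 / m < 1 - x" using j0s m0 by (simp add: s_def field_simps)
        ultimately show ?thesis unfolding B_def by auto
      qed
      have hb: "\<bar>h x\<bar> \<le> 2*m*(1-x)^2*exp(-m*(1-x))" unfolding h_def using pt_bound[OF m x] .
      also have "\<dots> = 2 * s^2 * exp (- s) / m" using m0 by (simp add: s_def power2_eq_square field_simps)
      also have "\<dots> \<le> 2 * (real j0 + 1)^2 * exp (- real j0) / m"
      proof -
        have "s^2 \<le> (real j0 + 1)^2" using j0s s0 by (intro power_mono) auto
        moreover have "exp (- s) \<le> exp (- real j0)" using j0s by simp
        ultimately have "s^2 * exp (- s) \<le> (real j0 + 1)^2 * exp (- real j0)"
          by (intro mult_mono) auto
        then show ?thesis using m0 by (simp add: divide_right_mono)
      qed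
      finally have "\<bar>h x\<bar> \<le> c j0" unfolding c_def .
      then have "ennreal (\<bar>h x\<bar> * cmod (f x)) \<le> ennreal (c j0 * (indicator (B j0) x * cmod (f x)))"
        using xB by (intro ennreal_leI) (auto intro: mult_right_mono)
      also have "\<dots> \<le> (\<Sum>j. ennreal (c j * (indicator (B j) x * cmod (f x))))"
        by (rule ennreal_term_le_suminf)
      finally show ?thesis .
    qed
    have shell: "(\<integral>\<^sup>+x. ennreal (indicator (B j) x * cmod (f x)) \<partial>M) \<le> ennreal (K * ((real j + 1) / m) powr \<sigma>)" for j
    proof -
      define a0 where "a0 = max 0 (1 - (real j + 1) / m)"
      have a0: "a0 \<in> {0..<1}" unfolding a0_def using m0 by auto
      have "(\<integral>\<^sup>+x. ennreal (indicator (B j) x * cmod (f x)) \<partial>M)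
           \<le> (\<integral>\<^sup>+x. ennreal (indicator {a0..<1} x * cmod (f x)) \<partial>M)"
      proof (rule nn_integral_mono)
        fix x assume "x \<in> space M"
        then have x: "0 \<le> x" "x < 1" using spM by auto
        have "indicator (B j) x \<le> (indicator {a0..<1} x :: real)"
          using x m0 unfolding B_def a0_def by (auto simp: indicator_def)
        then show "ennreal (indicator (B j) x * cmod (f x)) \<le> ennreal (indicator {a0..<1} x * cmod (f x))"
          by (intro ennreal_leI mult_right_mono) auto
      qed
      also have "\<dots> = ennreal (total_variation M f {a0..<1})" by (rule tv_nn)
      also have "\<dots> \<le> ennreal (K * (1 - a0) powr \<sigma>)" using K[OF a0] by (rule ennreal_leI)
      also have "\<dots> \<le> ennreal (K * ((real j + 1) / m) powr \<sigma>)"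
      proof (intro ennreal_leI mult_left_mono powr_mono2 K0 sigma_nonneg)
        show "0 \<le> 1 - a0" using a0 by simp
        show "1 - a0 \<le> (real j + 1) / m" unfolding a0_def using m0 by auto
      qed
      finally show ?thesis .
    qed
    have term_eq: "c j * (K * ((real j + 1) / m) powr \<sigma>) = 2 * K / m powr (1 + \<sigma>) * a j" for j
    proof -
      have "((real j + 1) / m) powr \<sigma> = (real j + 1) powr \<sigma> / m powr \<sigma>"
        using m0 by (simp add: powr_divide)
      moreover have "(real j + 1) powr (2 + \<sigma>) = (real j + 1)^2 * (real j + 1) powr \<sigma>"
        by (simp add: powr_add powr_numeral)
      moreover have "m powr (1 + \<sigma>) = m * m powr \<sigma>" using m0 by (simp add: powr_add)
      ultimately show ?thesis unfolding c_def a_def using m0 by (simp add: field_simps)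
    qed
    have bmeas: "(\<lambda>x. indicator (B j) x * cmod (f x)) \<in> borel_measurable M" for j
    proof (rule borel_measurable_times)
      show "(indicator (B j) :: real \<Rightarrow> real) \<in> borel_measurable M"
        unfolding B_def by (intro measR borel_measurable_indicator) simp
      show "(\<lambda>x. cmod (f x)) \<in> borel_measurable M" using fmeas by simp
    qed
    have "(\<integral>\<^sup>+x. ennreal (\<bar>h x\<bar> * cmod (f x)) \<partial>M)
        \<le> (\<integral>\<^sup>+x. (\<Sum>j. ennreal (c j * (indicator (B j) x * cmod (f x)))) \<partial>M)"
      by (rule nn_integral_mono) (rule ptw)
    also have "\<dots> = (\<Sum>j. \<integral>\<^sup>+x. ennreal (c j * (indicator (B j) x * cmod (f x))) \<partial>M)"
    proof (rule nn_integral_suminf)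
      fix j
      have "(\<lambda>x. indicator (B j) x * cmod (f x)) \<in> borel_measurable M"
      proof (rule borel_measurable_times)
        show "(indicator (B j) :: real \<Rightarrow> real) \<in> borel_measurable M"
          unfolding B_def by (intro measR borel_measurable_indicator) simp
        show "(\<lambda>x. cmod (f x)) \<in> borel_measurable M" using fmeas by simp
      qed
      then show "(\<lambda>x. ennreal (c j * (indicator (B j) x * cmod (f x)))) \<in> borel_measurable M"
        by simp
    qed
    also have "\<dots> \<le> (\<Sum>j. ennreal (2 * K / m powr (1 + \<sigma>) * a j))"
    proof (rule suminf_le)
      fix j
      have "(\<integral>\<^sup>+x. ennreal (c j * (indicator (B j) x * cmod (f x))) \<partial>M)
          = ennreal (c j) * (\<integral>\<^sup>+x. ennreal (indicator (B j) x * cmod (f x)) \<partial>M)"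
      proof -
        have "(\<integral>\<^sup>+x. ennreal (c j * (indicator (B j) x * cmod (f x))) \<partial>M)
            = (\<integral>\<^sup>+x. ennreal (c j) * ennreal (indicator (B j) x * cmod (f x)) \<partial>M)"
          using c0[of j] by (intro nn_integral_cong) (simp add: ennreal_mult)
        also have "\<dots> = ennreal (c j) * (\<integral>\<^sup>+x. ennreal (indicator (B j) x * cmod (f x)) \<partial>M)"
          using bmeas[of j] by (intro nn_integral_cmult) simp
        finally show ?thesis .
      qed
      also have "\<dots> \<le> ennreal (c j) * ennreal (K * ((real j + 1) / m) powr \<sigma>)"
        by (intro mult_left_mono shell) auto
      also have "\<dots> = ennreal (2 * K / m powr (1 + \<sigma>) * a j)"
        using c0[of j] term_eq[of j] K0 by (simp add: ennreal_mult'[symmetric])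
      finally show "(\<integral>\<^sup>+x. ennreal (c j * (indicator (B j) x * cmod (f x))) \<partial>M)
          \<le> ennreal (2 * K / m powr (1 + \<sigma>) * a j)" .
    qed (auto intro: summableI)
    also have "\<dots> = ennreal (2 * K / m powr (1 + \<sigma>) * S)"
    proof -
      have "summable (\<lambda>j. 2 * K / m powr (1 + \<sigma>) * a j)" by (intro summable_mult a_summ)
      moreover have "(\<Sum>j. 2 * K / m powr (1 + \<sigma>) * a j) = 2 * K / m powr (1 + \<sigma>) * S"
        unfolding S_def using a_summ by (rule suminf_mult)
      ultimately show ?thesis using K0 a_nn by (subst suminf_ennreal2) auto
    qed
    finally have nnb: "(\<integral>\<^sup>+x. ennreal (\<bar>h x\<bar> * cmod (f x)) \<partial>M) \<le> ennreal (2 * K / m powr (1 + \<sigma>) * S)" .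
    have "(LINT x|M. \<bar>h x\<bar> * cmod (f x)) \<le> 2 * K / m powr (1 + \<sigma>) * S"
    proof -
      have "ennreal (LINT x|M. \<bar>h x\<bar> * cmod (f x)) \<le> ennreal (2 * K / m powr (1 + \<sigma>) * S)"
        using nnb by (subst nn_integral_eq_integral[OF hfint, symmetric]) auto
      then show ?thesis using K0 S0 by (subst (asm) ennreal_le_iff) auto
    qed
    also have "2 * K / m powr (1 + \<sigma>) * S = C * norm (complex_of_real (1 / m powr (1 + \<sigma>)))"
    proof -
      have "norm (complex_of_real (1 / m powr (1 + \<sigma>))) = 1 / m powr (1 + \<sigma>)"
        unfolding norm_of_real using m0 by simp
      then show ?thesis unfolding C_def by simp
    qed
    finally have "(LINT x|M. \<bar>h x\<bar> * cmod (f x)) \<le> C * norm (complex_of_real (1 / m powr (1 + \<sigma>)))" .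
    with nb show ?thesis unfolding eq1 by linarith
  qed
  show ?thesis
    by (intro bigoI[of _ C] eventually_mono[OF eventually_ge_at_top[of 2]] main)
qed

end
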